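(* Let $G$ be a graph (of arbitrary cardinality) which is a lexicographic sum, indexed by a finite graph, of graphs each of which is a clique or an independent set. Then every graph equimorphic to $G$ is isomorphic to $G$; that is, $G$ has exactly one sibling up to isomorphism.
   Context: Graphs are undirected and loopless. $G$ embeds into $G'$ if $G$ is isomorphic to an induced subgraph of $G'$; $G,G'$ are equimorphic if each embeds into the other. If $H$ is a graph on a vertex set $J$ and $(L_j)_{j\in J}$ are graphs, the lexicographic sum of the $L_j$ indexed by $H$ is the graph on the disjoint union of the vertex sets of the $L_j$ in which two vertices of the same $L_j$ are adjacent iff they are adjacent in $L_j$, and $x\in L_i$, $y\in L_j$ with $i\neq j$ are adjacent iff $\{i,j\}$ is an edge of $H$. The cliques and independent sets may be infinite. *)

theory Defs
  imports Main
begin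

type_synonym 'a graph = "'a set \<times> ('a \<Rightarrow> 'a \<Rightarrow> bool)"

definition is_graph :: "'a graph \<Rightarrow> bool" where
  "is_graph G \<longleftrightarrow> (\<forall>x y. snd G x y \<longrightarrow> x \<in> fst G \<and> y \<in> fst G \<and> x \<noteq> y \<and> snd G y x)"

definition embeds :: "'a graph \<Rightarrow> 'b graph \<Rightarrow> bool" where
  "embeds G G' \<longleftrightarrow> (\<exists>f. inj_on f (fst G) \<and> f ` fst G \<subseteq> fst G' \<and>
      (\<forall>x\<in>fst G. \<forall>y\<in>fst G. snd G x y \<longleftrightarrow> snd G' (f x) (f y)))"

definition equimorphic :: "'a graph \<Rightarrow> 'b graph \<Rightarrow> bool" where
  "equimorphic G G' \<longleftrightarrow> embeds G G' \<and> embeds G' G"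

definition isomorphic :: "'a graph \<Rightarrow> 'b graph \<Rightarrow> bool" where
  "isomorphic G G' \<longleftrightarrow> (\<exists>f. bij_betw f (fst G) (fst G') \<and>
      (\<forall>x\<in>fst G. \<forall>y\<in>fst G. snd G x y \<longleftrightarrow> snd G' (f x) (f y)))"

definition is_clique :: "'a graph \<Rightarrow> bool" where
  "is_clique G \<longleftrightarrow> (\<forall>x\<in>fst G. \<forall>y\<in>fst G. x \<noteq> y \<longrightarrow> snd G x y)"

definition is_independent :: "'a graph \<Rightarrow> bool" where
  "is_independent G \<longleftrightarrow> (\<forall>x\<in>fst G. \<forall>y\<in>fst G. \<not> snd G x y)"

definition lexsum :: "'j graph \<Rightarrow> ('j \<Rightarrow> 'a graph) \<Rightarrow> ('j \<times> 'a) graph" where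
  "lexsum H L = (SIGMA j:fst H. fst (L j),
     (\<lambda>(i, x) (j, y). i \<in> fst H \<and> j \<in> fst H \<and> x \<in> fst (L i) \<and> y \<in> fst (L j) \<and>
        (if i = j then snd (L i) x y else snd H i j)))"

end

theory Submission
  imports Defs
begin


definition tw :: "'a graph \<Rightarrow> 'a \<Rightarrow> 'a \<Rightarrow> bool" where
  "tw G x y \<longleftrightarrow> x \<in> fst G \<and> y \<in> fst G \<and> (\<forall>z\<in>fst G. z \<noteq> x \<and> z \<noteq> y \<longrightarrow> (snd G z x \<longleftrightarrow> snd G z y))"

definition cls :: "'a graph \<Rightarrow> 'a \<Rightarrow> 'a set" where
  "cls G x = {y. tw G x y}"

definition emb :: "('a \<Rightarrow> 'b) \<Rightarrow> 'a graph \<Rightarrow> 'b graph \<Rightarrow> bool" where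
  "emb f G G' \<longleftrightarrow> inj_on f (fst G) \<and> f ` fst G \<subseteq> fst G' \<and>
      (\<forall>x\<in>fst G. \<forall>y\<in>fst G. snd G x y \<longleftrightarrow> snd G' (f x) (f y))"

definition lep :: "'a set \<Rightarrow> 'b set \<Rightarrow> bool" where
  "lep A B \<longleftrightarrow> (\<exists>h. inj_on h A \<and> h ` A \<subseteq> B)"

lemma tw_refl: "x \<in> fst G \<Longrightarrow> tw G x x" by (auto simp: tw_def)
lemma tw_sym: "tw G x y \<Longrightarrow> tw G y x" by (auto simp: tw_def)
lemma tw_in: "tw G x y \<Longrightarrow> x \<in> fst G \<and> y \<in> fst G" by (auto simp: tw_def)

lemma gsym: "is_graph G \<Longrightarrow> snd G x y \<Longrightarrow> snd G y x" by (auto simp: is_graph_def)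
lemma girr: "is_graph G \<Longrightarrow> \<not> snd G x x" by (auto simp: is_graph_def)

lemma tw_trans:
  assumes g: "is_graph G" and a: "tw G x y" and b: "tw G y z" shows "tw G x z"
proof -
  have in3: "x \<in> fst G" "y \<in> fst G" "z \<in> fst G" using tw_in[OF a] tw_in[OF b] by auto
  show ?thesis
  proof (cases "x = y \<or> y = z \<or> x = z")
    case True then show ?thesis using a b in3 tw_refl by metis
  next
    case False
    have "snd G z x \<longleftrightarrow> snd G z y" using a in3 False unfolding tw_def by auto
    moreover have "snd G x y \<longleftrightarrow> snd G x z" using b in3 False unfolding tw_def by auto
    ultimately have yx: "snd G y x \<longleftrightarrow> snd G y z" using gsym[OF g] by blast
    show ?thesis unfolding tw_def using a b in3 False yx by (auto simp: tw_def)
  qed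
qed

lemma cls_eq: "is_graph G \<Longrightarrow> tw G x y \<Longrightarrow> cls G x = cls G y"
  unfolding cls_def by (intro Collect_cong) (meson tw_sym tw_trans)

lemma tw_adj: "tw G a b \<Longrightarrow> z \<in> fst G \<Longrightarrow> z \<noteq> a \<Longrightarrow> z \<noteq> b \<Longrightarrow> snd G z a \<longleftrightarrow> snd G z b"
  by (auto simp: tw_def)

lemma cross:
  assumes g: "is_graph G" and "tw G a a'" "tw G b b'" "\<not> tw G a b"
  shows "snd G a b \<longleftrightarrow> snd G a' b'"
proof -
  have i: "a \<in> fst G" "a' \<in> fst G" "b \<in> fst G" "b' \<in> fst G" using tw_in[OF assms(2)] tw_in[OF assms(3)] by auto
  have "a \<noteq> b" using assms(4) i tw_refl by metis
  have "a' \<noteq> b" using assms by auto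
  have "b \<noteq> a'" "b \<noteq> a" using assms(2,4) tw_refl i by metis+
  have "a' \<noteq> b'" using assms tw_sym tw_trans[OF g] by metis
  have 1: "snd G b a \<longleftrightarrow> snd G b a'" using tw_adj[OF assms(2) i(3)] \<open>b \<noteq> a'\<close> \<open>b \<noteq> a\<close> by auto
  have 2: "snd G a' b \<longleftrightarrow> snd G a' b'" using tw_adj[OF assms(3) i(2)] \<open>a' \<noteq> b\<close> \<open>a' \<noteq> b'\<close> by auto
  show ?thesis using 1 2 gsym[OF g] by blast
qed

lemma homog:
  assumes g: "is_graph G" and "tw G x y" "tw G x u" "tw G x v" "x \<noteq> y" "u \<noteq> v"
  shows "snd G x y \<longleftrightarrow> snd G u v"
proof -
  have i: "x \<in> fst G" "y \<in> fst G" "u \<in> fst G" "v \<in> fst G" using tw_in[OF assms(2)] tw_in[OF assms(3)] tw_in[OF assms(4)] by auto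
  have tx: "\<And>p. p \<in> {x,y,u,v} \<Longrightarrow> tw G x p" using assms(2-4) tw_refl[OF i(1)] by auto
  have t: "\<And>p q. p \<in> {x,y,u,v} \<Longrightarrow> q \<in> {x,y,u,v} \<Longrightarrow> tw G p q"
  proof -
    fix p q assume p: "p \<in> {x,y,u,v}" and q: "q \<in> {x,y,u,v}"
    show "tw G p q" by (rule tw_trans[OF g tw_sym[OF tx[OF p]] tx[OF q]])
  qed
  have step: "\<And>p q r. p \<in> {x,y,u,v} \<Longrightarrow> q \<in> {x,y,u,v} \<Longrightarrow> r \<in> {x,y,u,v} \<Longrightarrow> p \<noteq> q \<Longrightarrow> p \<noteq> r
     \<Longrightarrow> snd G p q \<longleftrightarrow> snd G p r"
  proof -
    fix p q r assume "p \<in> {x,y,u,v}" "q \<in> {x,y,u,v}" "r \<in> {x,y,u,v}" "p \<noteq> q" "p \<noteq> r"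
    then show "snd G p q \<longleftrightarrow> snd G p r" using tw_adj[OF t, of q r p] i by auto
  qed
  show ?thesis
  proof (cases "u = x")
    case True then show ?thesis using step[of x y v] assms by auto
  next
    case False
    have "snd G x y \<longleftrightarrow> snd G x u" using step[of x y u] False assms by auto
    also have "\<dots> \<longleftrightarrow> snd G u x" using gsym[OF g] by blast
    also have "\<dots> \<longleftrightarrow> snd G u v" using step[of u x v] False assms by auto
    finally show ?thesis .
  qed
qed

lemma emb_tw:
  assumes e: "emb f G' G" and "x \<in> fst G'" "y \<in> fst G'" "tw G (f x) (f y)"
  shows "tw G' x y"
  unfolding tw_def
proof (intro conjI ballI impI)
  fix z assume z: "z \<in> fst G'" "z \<noteq> x \<and> z \<noteq> y"
  have "f z \<noteq> f x" "f z \<noteq> f y" using e z assms unfolding emb_def inj_on_def by metis+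
  moreover have "f z \<in> fst G" using e z unfolding emb_def by auto
  ultimately have "snd G (f z) (f x) \<longleftrightarrow> snd G (f z) (f y)" using tw_adj[OF assms(4)] by auto
  then show "snd G' z x \<longleftrightarrow> snd G' z y" using e z assms unfolding emb_def by auto
qed (use assms in auto)

lemma factor_card:
  assumes "finite (p ` S)" "\<forall>x\<in>S. \<forall>y\<in>S. p x = p y \<longrightarrow> q x = q y"
  shows "q ` S = (\<lambda>b. q (inv_into S p b)) ` (p ` S)"
proof -
  have "\<And>x. x \<in> S \<Longrightarrow> q (inv_into S p (p x)) = q x"
    using assms(2) by (metis inv_into_into f_inv_into_f imageI)
  then show ?thesis by (auto simp: image_image)
qed

lemma factor_le:
  assumes "finite (p ` S)" "\<forall>x\<in>S. \<forall>y\<in>S. p x = p y \<longrightarrow> q x = q y"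
  shows "finite (q ` S) \<and> card (q ` S) \<le> card (p ` S)"
  using factor_card[OF assms] assms(1) by (metis card_image_le finite_imageI)

lemma factor_inj:
  assumes "finite (p ` S)" "\<forall>x\<in>S. \<forall>y\<in>S. p x = p y \<longrightarrow> q x = q y"
    and "card (q ` S) = card (p ` S)" "x \<in> S" "y \<in> S" "q x = q y"
  shows "p x = p y"
proof -
  let ?h = "\<lambda>b. q (inv_into S p b)"
  have img: "q ` S = ?h ` (p ` S)" by (rule factor_card[OF assms(1,2)])
  have inj: "inj_on ?h (p ` S)"
    by (rule eq_card_imp_inj_on[OF assms(1)]) (simp add: img[symmetric] assms(3))
  have e1: "?h (p x) = q x" "?h (p y) = q y"
    using assms(2,4,5) by (metis inv_into_into f_inv_into_f imageI)+
  have e: "?h (p x) = ?h (p y)" using e1 assms(6) by simp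
  show ?thesis by (rule inj_onD[OF inj e imageI[OF assms(4)] imageI[OF assms(5)]])
qed



lemma mem_cls: "x \<in> fst G \<Longrightarrow> x \<in> cls G x" by (simp add: cls_def tw_refl)

lemma cls_tw: "y \<in> fst G \<Longrightarrow> cls G x = cls G y \<Longrightarrow> tw G x y"
  using mem_cls[of y G] by (auto simp: cls_def)

lemma fin_transfer:
  assumes gG: "is_graph G" and gG': "is_graph G'" and fin: "finite (cls G ` fst G)" and f: "emb f G' G"
  shows "finite (cls G' ` fst G') \<and> card (cls G' ` fst G') \<le> card ((cls G \<circ> f) ` fst G')
     \<and> (cls G \<circ> f) ` fst G' \<subseteq> cls G ` fst G \<and> finite ((cls G \<circ> f) ` fst G')
     \<and> (\<forall>x\<in>fst G'. \<forall>y\<in>fst G'. (cls G \<circ> f) x = (cls G \<circ> f) y \<longrightarrow> cls G' x = cls G' y)"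
proof -
  have fV: "f ` fst G' \<subseteq> fst G" using f by (auto simp: emb_def)
  have sub: "(cls G \<circ> f) ` fst G' \<subseteq> cls G ` fst G" using fV by (auto simp: image_comp[symmetric])
  have finf: "finite ((cls G \<circ> f) ` fst G')" using fin sub finite_subset by blast
  have fact: "\<forall>x\<in>fst G'. \<forall>y\<in>fst G'. (cls G \<circ> f) x = (cls G \<circ> f) y \<longrightarrow> cls G' x = cls G' y"
  proof (intro ballI impI)
    fix x y assume xy: "x \<in> fst G'" "y \<in> fst G'" "(cls G \<circ> f) x = (cls G \<circ> f) y"
    then have "tw G (f x) (f y)" using cls_tw[of "f y" G "f x"] fV by auto
    then have "tw G' x y" using emb_tw[OF f] xy by auto
    then show "cls G' x = cls G' y" using cls_eq[OF gG'] by blast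
  qed
  have "finite (cls G' ` fst G') \<and> card (cls G' ` fst G') \<le> card ((cls G \<circ> f) ` fst G')"
    using factor_le[OF finf fact] .
  with sub finf fact show ?thesis by blast
qed



lemma strong:
  assumes gG: "is_graph G" and gG': "is_graph G'" and fin: "finite (cls G ` fst G)"
   and f: "emb f G' G" and g: "emb g G G'"
  shows "finite (cls G' ` fst G')"
    "\<forall>x\<in>fst G'. \<forall>y\<in>fst G'. tw G' x y \<longrightarrow> tw G (f x) (f y)"
    "\<forall>v\<in>fst G. \<exists>x\<in>fst G'. tw G v (f x)"
proof -
  have fV: "f ` fst G' \<subseteq> fst G" using f unfolding emb_def by (elim conjE)
  note A = fin_transfer[OF gG gG' fin f]
  note A1 = A[THEN conjunct1]
  note A2 = A[THEN conjunct2, THEN conjunct1]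
  note A3 = A[THEN conjunct2, THEN conjunct2, THEN conjunct1]
  note Af = A[THEN conjunct2, THEN conjunct2, THEN conjunct2, THEN conjunct1]
  note Afac = A[THEN conjunct2, THEN conjunct2, THEN conjunct2, THEN conjunct2]
  show fin': "finite (cls G' ` fst G')" by (rule A1)
  note B = fin_transfer[OF gG' gG fin' g]
  note B2 = B[THEN conjunct2, THEN conjunct1]
  note B3 = B[THEN conjunct2, THEN conjunct2, THEN conjunct1]
  have a2: "card ((cls G \<circ> f) ` fst G') \<le> card (cls G ` fst G)" by (rule card_mono[OF fin A3])
  have b2: "card ((cls G' \<circ> g) ` fst G) \<le> card (cls G' ` fst G')" by (rule card_mono[OF fin' B3])
  have c1: "card (cls G' ` fst G') = card ((cls G \<circ> f) ` fst G')"
    by (rule le_antisym[OF A2 order_trans[OF a2 order_trans[OF B2 b2]]])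
  have c2: "card ((cls G \<circ> f) ` fst G') = card (cls G ` fst G)"
    by (rule le_antisym[OF a2 order_trans[OF B2 order_trans[OF b2 A2]]])
  note c = c1 c2
  show "\<forall>x\<in>fst G'. \<forall>y\<in>fst G'. tw G' x y \<longrightarrow> tw G (f x) (f y)"
  proof (intro ballI impI)
    fix x y assume xy: "x \<in> fst G'" "y \<in> fst G'" "tw G' x y"
    have "cls G' x = cls G' y" by (rule cls_eq[OF gG' xy(3)])
    then have "(cls G \<circ> f) x = (cls G \<circ> f) y" by (rule factor_inj[OF Af Afac c(1) xy(1) xy(2)])
    then have ce: "cls G (f x) = cls G (f y)" by (simp only: comp_apply)
    have fy: "f y \<in> fst G" using fV xy(2) by blast
    show "tw G (f x) (f y)" by (rule cls_tw[OF fy ce])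
  qed
  have eq: "(cls G \<circ> f) ` fst G' = cls G ` fst G" by (rule card_subset_eq[OF fin A3 c(2)])
  show "\<forall>v\<in>fst G. \<exists>x\<in>fst G'. tw G v (f x)"
  proof
    fix v assume v: "v \<in> fst G"
    then have "cls G v \<in> (cls G \<circ> f) ` fst G'" using eq by simp
    then obtain x where x: "x \<in> fst G'" "cls G v = cls G (f x)" by auto
    have fx: "f x \<in> fst G" using fV x(1) by blast
    have "tw G v (f x)" by (rule cls_tw[OF fx x(2)])
    then show "\<exists>x\<in>fst G'. tw G v (f x)" using x(1) by blast
  qed
qed


lemma lep_trans: "lep A B \<Longrightarrow> lep B C \<Longrightarrow> lep A C"
proof -
  assume "lep A B" "lep B C"
  then obtain h1 h2 where h: "inj_on h1 A" "h1 ` A \<subseteq> B" "inj_on h2 B" "h2 ` B \<subseteq> C"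
    unfolding lep_def by blast
  have "inj_on (h2 \<circ> h1) A" using h by (meson comp_inj_on inj_on_subset)
  moreover have "(h2 \<circ> h1) ` A \<subseteq> C" using h by (auto simp: image_subset_iff)
  ultimately show "lep A C" unfolding lep_def by blast
qed

lemma lep_eq: "A = B \<Longrightarrow> lep A B"
  unfolding lep_def by (rule exI[of _ id]) auto

lemma lep_emb:
  assumes f: "emb f G' G" and x: "x \<in> fst G'"
    and S: "\<forall>x\<in>fst G'. \<forall>y\<in>fst G'. tw G' x y \<longrightarrow> tw G (f x) (f y)"
  shows "lep (cls G' x) (cls G (f x))"
  unfolding lep_def
proof (intro exI conjI)
  have "cls G' x \<subseteq> fst G'" by (auto simp: cls_def tw_def)
  then show "inj_on f (cls G' x)" using f unfolding emb_def by (meson inj_on_subset)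
  show "f ` cls G' x \<subseteq> cls G (f x)"
  proof
    fix z assume "z \<in> f ` cls G' x"
    then obtain y where y: "y \<in> cls G' x" "z = f y" by blast
    then have t: "tw G' x y" by (simp add: cls_def)
    then have "y \<in> fst G'" using tw_in[OF t] by blast
    then have "tw G (f x) (f y)" using S x t by blast
    then show "z \<in> cls G (f x)" using y by (simp add: cls_def)
  qed
qed



lemma cancel:
  assumes f: "emb f G' G" and g: "emb g G G'" and x: "x \<in> fst G'"
  shows "tw G' (((g \<circ> f) ^^ i) x) (((g \<circ> f) ^^ (i + k)) x) \<Longrightarrow> tw G' x (((g \<circ> f) ^^ k) x)"
proof (induction i)
  case 0 then show ?case by simp
next
  case (Suc i)
  have cl: "\<And>n. ((g \<circ> f) ^^ n) x \<in> fst G'"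
  proof -
    fix n show "((g \<circ> f) ^^ n) x \<in> fst G'"
      by (induction n) (use f g x in \<open>auto simp: emb_def image_subset_iff\<close>)
  qed
  have fcl: "\<And>n. f (((g \<circ> f) ^^ n) x) \<in> fst G" using cl f by (auto simp: emb_def)
  have "tw G' (g (f (((g \<circ> f) ^^ i) x))) (g (f (((g \<circ> f) ^^ (i + k)) x)))"
    using Suc.prems by (simp add: o_def)
  then have "tw G (f (((g \<circ> f) ^^ i) x)) (f (((g \<circ> f) ^^ (i + k)) x))"
    using emb_tw[OF g fcl fcl] by blast
  then have "tw G' (((g \<circ> f) ^^ i) x) (((g \<circ> f) ^^ (i + k)) x)"
    using emb_tw[OF f cl cl] by blast
  then show ?case using Suc.IH by blast
qed



lemma iter_in:
  assumes f: "emb f G' G" and g: "emb g G G'" and x: "x \<in> fst G'"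
  shows "((g \<circ> f) ^^ n) x \<in> fst G'"
  by (induction n) (use f g x in \<open>auto simp: emb_def image_subset_iff\<close>)

lemma class_bij:
  assumes gG: "is_graph G" and gG': "is_graph G'" and fin: "finite (cls G ` fst G)"
   and f: "emb f G' G" and g: "emb g G G'" and x: "x \<in> fst G'"
  shows "\<exists>h. bij_betw h (cls G' x) (cls G (f x))"
proof -
  note S1 = strong[OF gG gG' fin f g]
  note S2 = strong[OF gG' gG S1(1) g f]
  let ?t = "g \<circ> f"
  have fx: "f x \<in> fst G" using f x by (auto simp: emb_def)
  have step: "\<And>y. y \<in> fst G' \<Longrightarrow> lep (cls G' y) (cls G' (?t y))"
  proof -
    fix y assume y: "y \<in> fst G'"
    have fy: "f y \<in> fst G" using f y by (auto simp: emb_def)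
    show "lep (cls G' y) (cls G' (?t y))"
      using lep_trans[OF lep_emb[OF f y S1(2)] lep_emb[OF g fy S2(2)]] by simp
  qed
  have chain: "\<And>m. lep (cls G' (?t x)) (cls G' ((?t ^^ Suc m) x))"
  proof -
    fix m show "lep (cls G' (?t x)) (cls G' ((?t ^^ Suc m) x))"
    proof (induction m)
      case 0 then show ?case by (simp add: lep_eq)
    next
      case (Suc m)
      have "lep (cls G' ((?t ^^ Suc m) x)) (cls G' (?t ((?t ^^ Suc m) x)))"
        using step iter_in[OF f g x] by blast
      then have "lep (cls G' (?t x)) (cls G' (?t ((?t ^^ Suc m) x)))" by (rule lep_trans[OF Suc.IH])
      moreover have "?t ((?t ^^ Suc m) x) = (?t ^^ Suc (Suc m)) x" by (metis funpow.simps(2) comp_apply)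
      ultimately show ?case by (simp only:)
    qed
  qed
  have "\<not> inj (\<lambda>n. cls G' ((?t ^^ n) x))"
  proof
    assume "inj (\<lambda>n. cls G' ((?t ^^ n) x))"
    moreover have "(\<lambda>n. cls G' ((?t ^^ n) x)) ` UNIV \<subseteq> cls G' ` fst G'"
      using iter_in[OF f g x] by auto
    ultimately have "finite (UNIV :: nat set)" using inj_on_finite S1(1) by blast
    then show False by simp
  qed
  then obtain i j where ij: "i \<noteq> j" "cls G' ((?t ^^ i) x) = cls G' ((?t ^^ j) x)"
    unfolding inj_def by blast
  have "\<exists>i k. cls G' ((?t ^^ i) x) = cls G' ((?t ^^ (i + Suc k)) x)"
  proof (cases "i < j")
    case True
    then obtain k where "j = Suc (i + k)" using less_iff_Suc_add by auto
    then show ?thesis using ij(2) by (intro exI[of _ i] exI[of _ k]) simp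
  next
    case False then have "j < i" using ij by simp
    then obtain k where "i = Suc (j + k)" using less_iff_Suc_add by auto
    then show ?thesis using ij(2) by (intro exI[of _ j] exI[of _ k]) simp
  qed
  then obtain i k where ik: "cls G' ((?t ^^ i) x) = cls G' ((?t ^^ (i + Suc k)) x)" by blast
  have "tw G' ((?t ^^ i) x) ((?t ^^ (i + Suc k)) x)"
    using cls_tw[OF iter_in[OF f g x] ik] .
  then have "tw G' x ((?t ^^ Suc k) x)" by (rule cancel[OF f g x])
  then have bk: "cls G' ((?t ^^ Suc k) x) = cls G' x" using cls_eq[OF gG'] by (metis sym)
  have l1: "lep (cls G' x) (cls G (f x))" using lep_emb[OF f x S1(2)] .
  have "lep (cls G (f x)) (cls G' (g (f x)))" using lep_emb[OF g fx S2(2)] .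
  then have "lep (cls G (f x)) (cls G' (?t x))" by simp
  then have "lep (cls G (f x)) (cls G' ((?t ^^ Suc k) x))" by (rule lep_trans[OF _ chain[of k]])
  then have l2: "lep (cls G (f x)) (cls G' x)" using bk by (simp only:)
  obtain h1 h2 where "inj_on h1 (cls G' x)" "h1 ` cls G' x \<subseteq> cls G (f x)"
    "inj_on h2 (cls G (f x))" "h2 ` cls G (f x) \<subseteq> cls G' x"
    using l1 l2 unfolding lep_def by blast
  then show ?thesis by (rule Schroeder_Bernstein)
qed

lemma main_iso:
  assumes gG: "is_graph G" and gG': "is_graph G'" and fin: "finite (cls G ` fst G)"
   and f: "emb f G' G" and g: "emb g G G'"
  shows "isomorphic G' G"
proof -
  note S1 = strong[OF gG gG' fin f g]
  define H where "H x = (SOME h. bij_betw h (cls G' x) (cls G (f x)))" for x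
  define F where "F x = H x x" for x
  have Hb: "\<And>x. x \<in> fst G' \<Longrightarrow> bij_betw (H x) (cls G' x) (cls G (f x))"
    unfolding H_def using class_bij[OF gG gG' fin f g] by (metis someI_ex)
  have fin1: "\<And>x. x \<in> fst G' \<Longrightarrow> f x \<in> fst G" using f by (auto simp: emb_def)
  have Hsame: "\<And>x y. x \<in> fst G' \<Longrightarrow> y \<in> fst G' \<Longrightarrow> tw G' x y \<Longrightarrow> H y = H x"
  proof -
    fix x y assume xy: "x \<in> fst G'" "y \<in> fst G'" "tw G' x y"
    have "cls G' x = cls G' y" using cls_eq[OF gG' xy(3)] .
    moreover have "cls G (f x) = cls G (f y)" using cls_eq[OF gG S1(2)[rule_format, OF xy]] .
    ultimately show "H y = H x" unfolding H_def by simp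
  qed
  have Fin: "\<And>x. x \<in> fst G' \<Longrightarrow> tw G (f x) (F x)"
  proof -
    fix x assume x: "x \<in> fst G'"
    have "F x \<in> cls G (f x)" unfolding F_def using Hb[OF x] mem_cls[OF x] bij_betwE by blast
    then show "tw G (f x) (F x)" by (simp add: cls_def)
  qed
  have inj: "inj_on F (fst G')"
  proof (rule inj_onI)
    fix x y assume xy: "x \<in> fst G'" "y \<in> fst G'" "F x = F y"
    have "tw G (F x) (f y)" using tw_sym[OF Fin[OF xy(2)]] xy(3) by simp
    then have "tw G (f x) (f y)" using tw_trans[OF gG Fin[OF xy(1)]] by blast
    then have t: "tw G' x y" using emb_tw[OF f xy(1,2)] by blast
    then have "H y = H x" using Hsame[OF xy(1,2)] by blast
    moreover have "y \<in> cls G' x" using t by (simp add: cls_def)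
    moreover have "x \<in> cls G' x" using mem_cls[OF xy(1)] .
    moreover have "H x x = H x y" using xy(3) \<open>H y = H x\<close> unfolding F_def by simp
    ultimately show "x = y" by (metis inj_onD[OF bij_betw_imp_inj_on[OF Hb[OF xy(1)]]])
  qed
  have img: "F ` fst G' = fst G"
  proof
    show "F ` fst G' \<subseteq> fst G"
    proof
      fix z assume "z \<in> F ` fst G'"
      then obtain x where "x \<in> fst G'" "z = F x" by blast
      then show "z \<in> fst G" using tw_in[OF Fin[OF \<open>x \<in> fst G'\<close>]] by simp
    qed
    show "fst G \<subseteq> F ` fst G'"
    proof
      fix v assume v: "v \<in> fst G"
      then obtain x where x: "x \<in> fst G'" "tw G v (f x)" using S1(3) by blast
      then have "v \<in> cls G (f x)" by (simp add: cls_def tw_sym)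
      then obtain y where y: "y \<in> cls G' x" "H x y = v" using Hb[OF x(1)] by (metis bij_betw_def imageE)
      have ty: "tw G' x y" using y by (simp add: cls_def)
      then have yin: "y \<in> fst G'" using tw_in[OF ty] by blast
      have "F y = v" unfolding F_def using Hsame[OF x(1) yin ty] y by simp
      then show "v \<in> F ` fst G'" using yin by blast
    qed
  qed
  have adj: "\<forall>x\<in>fst G'. \<forall>y\<in>fst G'. snd G' x y \<longleftrightarrow> snd G (F x) (F y)"
  proof (intro ballI)
    fix x y assume x: "x \<in> fst G'" and y: "y \<in> fst G'"
    have e: "snd G' x y \<longleftrightarrow> snd G (f x) (f y)" using f x y unfolding emb_def by blast
    show "snd G' x y \<longleftrightarrow> snd G (F x) (F y)"
    proof (cases "tw G' x y")
      case True
      show ?thesis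
      proof (cases "x = y")
        case True then show ?thesis using girr[OF gG] girr[OF gG'] by simp
      next
        case False
        have "F x \<noteq> F y" using inj x y False by (meson inj_onD)
        moreover have "f x \<noteq> f y" using f x y False unfolding emb_def by (meson inj_onD)
        moreover have "tw G (f x) (f y)" using S1(2)[rule_format, OF x y True] .
        moreover have "tw G (f x) (F y)" using tw_trans[OF gG \<open>tw G (f x) (f y)\<close> Fin[OF y]] .
        ultimately show ?thesis using homog[OF gG \<open>tw G (f x) (f y)\<close> Fin[OF x] \<open>tw G (f x) (F y)\<close> \<open>f x \<noteq> f y\<close> \<open>F x \<noteq> F y\<close>] e by simp
      qed
    next
      case False
      then have "\<not> tw G (f x) (f y)" using emb_tw[OF f x y] by blast
      then show ?thesis using cross[OF gG Fin[OF x] Fin[OF y]] e by simp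
    qed
  qed
  have "bij_betw F (fst G') (fst G)" using inj img by (simp add: bij_betw_def)
  then show ?thesis unfolding isomorphic_def using adj by blast
qed



lemma lex_fst: "fst (lexsum H L) = (SIGMA j:fst H. fst (L j))"
  by (simp add: lexsum_def)

lemma lex_snd: "snd (lexsum H L) (i, x) (j, y) \<longleftrightarrow> (i \<in> fst H \<and> j \<in> fst H \<and> x \<in> fst (L i) \<and> y \<in> fst (L j) \<and>
        (if i = j then snd (L i) x y else snd H i j))"
  by (simp add: lexsum_def)

lemma lex_graph:
  assumes gH: "is_graph H" and gL: "\<forall>j\<in>fst H. is_graph (L j)"
  shows "is_graph (lexsum H L)"
  unfolding is_graph_def
proof (intro allI impI)
  fix p q assume a: "snd (lexsum H L) p q"
  obtain i x where p: "p = (i, x)" by (cases p)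
  obtain j y where q: "q = (j, y)" by (cases q)
  have a': "i \<in> fst H \<and> j \<in> fst H \<and> x \<in> fst (L i) \<and> y \<in> fst (L j) \<and>
        (if i = j then snd (L i) x y else snd H i j)" using a unfolding p q lex_snd .
  show "p \<in> fst (lexsum H L) \<and> q \<in> fst (lexsum H L) \<and> p \<noteq> q \<and> snd (lexsum H L) q p"
  proof (cases "i = j")
    case True
    then have "snd (L i) x y" "i \<in> fst H" using a' by auto
    then have "x \<noteq> y" "snd (L i) y x" using gL unfolding is_graph_def by blast+
    then show ?thesis using a' True unfolding p q lex_snd lex_fst by auto
  next
    case False
    then have "snd H i j" using a' by auto
    then have "snd H j i" using gH unfolding is_graph_def by blast
    then show ?thesis using a' False unfolding p q lex_snd lex_fst by auto
  qed
qed

lemma lex_tw: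
  assumes i: "i \<in> fst H" and x: "x \<in> fst (L i)" and y: "y \<in> fst (L i)"
    and ci: "is_clique (L i) \<or> is_independent (L i)"
  shows "tw (lexsum H L) (i, x) (i, y)"
  unfolding tw_def
proof (intro conjI ballI impI)
  show "(i, x) \<in> fst (lexsum H L)" "(i, y) \<in> fst (lexsum H L)" using i x y by (auto simp: lex_fst)
  fix z assume z: "z \<in> fst (lexsum H L)" "z \<noteq> (i, x) \<and> z \<noteq> (i, y)"
  obtain j w where zz: "z = (j, w)" by (cases z)
  have jw: "j \<in> fst H" "w \<in> fst (L j)" using z(1) unfolding zz lex_fst by auto
  show "snd (lexsum H L) z (i, x) \<longleftrightarrow> snd (lexsum H L) z (i, y)"
  proof (cases "j = i")
    case True
    then have wx: "w \<noteq> x" "w \<noteq> y" using z(2) zz by auto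
    have "snd (L i) w x \<longleftrightarrow> snd (L i) w y"
      using ci wx jw True x y unfolding is_clique_def is_independent_def by auto
    then show ?thesis unfolding zz lex_snd using True jw i x y by simp
  next
    case False
    then show ?thesis unfolding zz lex_snd using jw i x y by simp
  qed
qed

lemma lex_fin:
  assumes gH: "is_graph H" and finH: "finite (fst H)"
    and gL: "\<forall>j\<in>fst H. is_graph (L j) \<and> (is_clique (L j) \<or> is_independent (L j))"
  shows "finite (cls (lexsum H L) ` fst (lexsum H L))"
proof -
  let ?G = "lexsum H L"
  have gG: "is_graph ?G" using lex_graph[OF gH] gL by blast
  let ?r = "\<lambda>i. cls ?G (i, SOME x. x \<in> fst (L i))"
  have "cls ?G ` fst ?G \<subseteq> ?r ` fst H"
  proof
    fix c assume "c \<in> cls ?G ` fst ?G"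
    then obtain p where p: "p \<in> fst ?G" "c = cls ?G p" by blast
    obtain i x where ix: "p = (i, x)" by (cases p)
    have i: "i \<in> fst H" and x: "x \<in> fst (L i)" using p(1) unfolding ix lex_fst by auto
    have s: "(SOME x. x \<in> fst (L i)) \<in> fst (L i)" using x by (rule someI)
    have ci: "is_clique (L i) \<or> is_independent (L i)" using gL i by blast
    have "tw ?G (i, x) (i, SOME x. x \<in> fst (L i))" by (rule lex_tw[where H=H and L=L, OF i x s ci])
    then have "cls ?G (i, x) = ?r i" by (rule cls_eq[OF gG])
    then show "c \<in> ?r ` fst H" using p(2) ix i by blast
  qed
  moreover have "finite (?r ` fst H)" using finH by blast
  ultimately show ?thesis by (rule finite_subset)
qed

lemma embeds_emb: "embeds A B \<Longrightarrow> \<exists>f. emb f A B"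
  by (simp add: embeds_def emb_def)

theorem theorem4p1:
  fixes H :: "'j graph" and L :: "'j \<Rightarrow> 'a graph" and G' :: "'b graph"
  assumes "is_graph H" and "finite (fst H)"
    and "\<forall>j\<in>fst H. is_graph (L j) \<and> (is_clique (L j) \<or> is_independent (L j))"
    and "is_graph G'"
    and "equimorphic G' (lexsum H L)"
  shows "isomorphic G' (lexsum H L)"
proof -
  have gG: "is_graph (lexsum H L)" using lex_graph[OF assms(1)] assms(3) by blast
  have fin: "finite (cls (lexsum H L) ` fst (lexsum H L))" by (rule lex_fin[OF assms(1,2,3)])
  obtain f where f: "emb f G' (lexsum H L)"
    using embeds_emb assms(5) unfolding equimorphic_def by blast
  obtain g where g: "emb g (lexsum H L) G'"
    using embeds_emb assms(5) unfolding equimorphic_def by blast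
  show ?thesis by (rule main_iso[OF gG assms(4) fin f g])
qed

end
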